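(* Let $F$ be an algebraically closed field of characteristic $\neq 2$, $R=F[t]$ with the involution ${}^*$ described in the context. Let $A,B\in M_2(R)$ be skew-hermitian with $\gcd(A)=\gcd(B)=1$ and $\det(A)=\det(B)\neq 0$. Then $A$ and $B$ are congruent.
   Context: $R=F[t]$ is the polynomial ring over $F$, and ${}^*$ is the $F$-algebra involution of $R$ that is the identity on $F$ and sends $t$ to $-t$. For $A=(a_{ij})\in M_n(R)$, $A^*$ is the matrix whose $(i,j)$ entry is $a_{ji}^*$; $A$ is skew-hermitian if $A^*=-A$. Congruence: $B=S^*AS$ for some $S\in\mathrm{GL}_n(R)$. $\gcd(A)$ denotes the monic generator (or $0$) of the ideal generated by all entries of $A$. *)

theory Defs
  imports "HOL-Analysis.Analysis" "HOL-Computational_Algebra.Polynomial_Factorial"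
begin

definition pinv :: "'a::comm_ring_1 poly \<Rightarrow> 'a poly" where
  "pinv p = pcompose p [:0, -1:]"

definition mstar :: "'a::comm_ring_1 poly ^ 'n ^ 'n \<Rightarrow> 'a poly ^ 'n ^ 'n" where
  "mstar A = (\<chi> i j. pinv (A $ j $ i))"

definition skew_hermitian :: "'a::comm_ring_1 poly ^ 'n ^ 'n \<Rightarrow> bool" where
  "skew_hermitian A \<longleftrightarrow> mstar A = - A"

definition entry_ideal :: "'a::comm_ring_1 poly ^ 'n ^ 'n \<Rightarrow> 'a poly set" where
  "entry_ideal A = {\<Sum>i\<in>UNIV. \<Sum>j\<in>UNIV. c i j * A $ i $ j | c. True}"

definition mgcd :: "'a::field poly ^ 'n ^ 'n \<Rightarrow> 'a poly" where
  "mgcd A = (THE g. (g = 0 \<or> lead_coeff g = 1) \<and> entry_ideal A = {x. g dvd x})"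

definition congruent_mat :: "'a::comm_ring_1 poly ^ 'n ^ 'n \<Rightarrow> 'a poly ^ 'n ^ 'n \<Rightarrow> bool" where
  "congruent_mat A B \<longleftrightarrow> (\<exists>S. invertible S \<and> B = mstar S ** A ** S)"

end

theory Submission
  imports Defs
begin

lemma pinv_mult[simp]: "pinv (p * q) = pinv p * pinv q"
  by (simp add: pinv_def pcompose_mult)
lemma pinv_add[simp]: "pinv (p + q) = pinv p + pinv q"
  by (simp add: pinv_def pcompose_add)
lemma pinv_diff[simp]: "pinv (p - q) = pinv p - (pinv q :: 'a::comm_ring_1 poly)"
  by (simp add: pinv_def pcompose_diff)
lemma pinv_uminus[simp]: "pinv (- p) = - pinv (p :: 'a::comm_ring_1 poly)"
  by (simp add: pinv_def pcompose_uminus)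
lemma pinv_const[simp]: "pinv [:c:] = [:c:]"
  by (simp add: pinv_def)
lemma pinv_0[simp]: "pinv 0 = 0"
  by (simp add: pinv_def)
lemma pinv_1[simp]: "pinv 1 = 1"
  by (simp add: pinv_def pcompose_1)
lemma pinv_smult[simp]: "pinv (smult c p) = smult c (pinv p)"
  by (simp add: pinv_def pcompose_smult)
lemma poly_pinv[simp]: "poly (pinv p) x = poly p (- x)"
  by (simp add: pinv_def poly_pcompose)
lemma pinv_pinv[simp]: "pinv (pinv (p :: 'a::comm_ring_1 poly)) = p"
proof -
  have "pcompose [:0, -1:] [:0, - 1:] = ([:0, 1:] :: 'a poly)"
    by (simp add: pcompose_pCons)
  then show ?thesis unfolding pinv_def by (simp add: pcompose_assoc[symmetric])
qed
lemma pinv_eq_0_iff[simp]: "pinv p = 0 \<longleftrightarrow> p = (0 :: 'a::comm_ring_1 poly)"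
  by (metis pinv_0 pinv_pinv)
lemma pinv_sum: "pinv (sum f A) = sum (\<lambda>i. pinv (f i)) A"
  by (simp add: pinv_def pcompose_sum)
lemma pinv_dvd: "p dvd q \<Longrightarrow> pinv p dvd pinv q"
  by (metis dvd_def pinv_mult)
lemma degree_pinv[simp]: "degree (pinv (p :: 'a::idom poly)) = degree p"
  by (simp add: pinv_def degree_pcompose)

definition mk2 :: "'a \<Rightarrow> 'a \<Rightarrow> 'a \<Rightarrow> 'a \<Rightarrow> 'a ^ 2 ^ 2" where
  "mk2 a b c d = (\<chi> i j. if i = 1 then (if j = 1 then a else b) else (if j = 1 then c else d))"

lemma two_neq: "(1::2) \<noteq> 2" by simp

lemma mk2_nth[simp]: "mk2 a b c d $ 1 $ 1 = a" "mk2 a b c d $ 1 $ 2 = b"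
  "mk2 a b c d $ 2 $ 1 = c" "mk2 a b c d $ 2 $ 2 = d"
  by (simp_all add: mk2_def)

lemma mk2_eta: "M = mk2 (M$1$1) (M$1$2) (M$2$1) (M$2$2)"
  by (simp add: vec_eq_iff forall_2)

lemma mk2_eq_iff: "mk2 a b c d = mk2 a' b' c' d' \<longleftrightarrow> a = a' \<and> b = b' \<and> c = c' \<and> d = d'"
  by (metis mk2_nth)

lemma mk2_mult: "mk2 a b c d ** mk2 e f g h =
   mk2 (a*e + b*g) (a*f + b*h) (c*e + d*g) (c*f + (d*h :: 'a::semiring_1))"
  by (simp add: vec_eq_iff forall_2 matrix_matrix_mult_def sum_2)

lemma mstar_mk2: "mstar (mk2 a b c d) = mk2 (pinv a) (pinv c) (pinv b) (pinv d)"
  by (simp add: vec_eq_iff forall_2 mstar_def)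

lemma mat1_mk2: "(mat 1 :: 'a::zero_neq_one ^2^2) = mk2 1 0 0 1"
  by (simp add: vec_eq_iff forall_2 mat_def)

lemma det_mk2: "det (mk2 a b c d) = a * d - b * (c :: 'a::comm_ring_1)"
  by (simp add: det_2)

lemma mstar_mult: "mstar (X ** Y) = mstar Y ** (mstar X :: 'a::comm_ring_1 poly ^ 'n ^ 'n)"
  by (simp add: vec_eq_iff mstar_def matrix_matrix_mult_def pinv_sum mult.commute)

lemma mstar_mstar[simp]: "mstar (mstar X) = X"
  by (simp add: vec_eq_iff mstar_def)

lemma mstar_mat1[simp]: "mstar (mat 1) = (mat 1 :: 'a::comm_ring_1 poly ^ 'n ^ 'n)"
  by (simp add: vec_eq_iff mstar_def mat_def)

lemma congruent_refl: "congruent_mat A A"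
  unfolding congruent_mat_def
  by (rule exI[of _ "mat 1"]) (simp add: invertible_def)

lemma congruent_sym: assumes "congruent_mat A B" shows "congruent_mat B A"
proof -
  obtain S where S: "invertible S" "B = mstar S ** A ** S" using assms congruent_mat_def by blast
  obtain S' where S': "S ** S' = mat 1" "S' ** S = mat 1" using S(1) invertible_def by blast
  have "mstar S' ** mstar S = mat 1" by (metis S'(1) mstar_mult mstar_mat1)
  then have "mstar S' ** B ** S' = A" unfolding S(2)
    by (metis S'(1) matrix_mul_assoc matrix_mul_lid matrix_mul_rid)
  moreover have "invertible S'" using S' invertible_def by blast
  ultimately show ?thesis unfolding congruent_mat_def by metis
qed

lemma congruent_trans: assumes "congruent_mat A B" "congruent_mat B C" shows "congruent_mat A C"
proof -
  obtain S where S: "invertible S" "B = mstar S ** A ** S" using assms congruent_mat_def by blast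
  obtain T where T: "invertible T" "C = mstar T ** B ** T" using assms congruent_mat_def by blast
  have "C = mstar (S ** T) ** A ** (S ** T)" unfolding T(2) S(2) mstar_mult
    by (simp add: matrix_mul_assoc)
  moreover have "invertible (S ** T)" using S T invertible_mult by blast
  ultimately show ?thesis unfolding congruent_mat_def by metis
qed

lemma invertible_mk2:
  assumes "a * d - b * c = (1 :: 'a::comm_ring_1)"
  shows "invertible (mk2 a b c d)"
  unfolding invertible_def
  by (rule exI[of _ "mk2 d (-b) (-c) a"]) (use assms in \<open>auto simp: mk2_mult mat1_mk2 mk2_eq_iff algebra_simps\<close>)

lemma congruent_mk2:
  assumes "a * d - b * c = 1" "B = mstar (mk2 a b c d) ** A ** mk2 a b c d"
  shows "congruent_mat A B"
  using assms invertible_mk2 congruent_mat_def by blast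

lemma uminus_mk2: "- mk2 a b c d = mk2 (-a) (-b) (-c) (-(d::'a::ab_group_add))"
  by (simp add: vec_eq_iff forall_2)

lemma skew_mk2: "skew_hermitian (mk2 a b c d) \<longleftrightarrow> pinv a = - a \<and> pinv c = - b \<and> pinv d = - d"
  unfolding skew_hermitian_def mstar_mk2 uminus_mk2 mk2_eq_iff
  by (metis add.inverse_inverse pinv_pinv pinv_uminus)


lemma alg_closed_infinite: "infinite (UNIV :: 'a::alg_closed_field set)"
proof
  assume fin: "finite (UNIV :: 'a set)"
  define q :: "'a poly" where "q = (\<Prod>x\<in>UNIV. [:-x, 1:])"
  have dq: "degree q = card (UNIV :: 'a set)"
    unfolding q_def by (subst degree_prod_eq_sum_degree) auto
  have "card (UNIV :: 'a set) > 0" using fin by (simp add: card_gt_0_iff)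
  then have "degree (1 + q) > 0" using dq by (simp add: degree_add_eq_right)
  then obtain y where "poly (1 + q) y = 0" using alg_closed_imp_poly_has_root by blast
  moreover have "poly q y = 0" unfolding q_def poly_prod using fin
    by (simp add: prod_zero_iff)
  ultimately show False by simp
qed

lemma exists_not_in: "finite (S :: 'a::alg_closed_field set) \<Longrightarrow> \<exists>x. x \<notin> S"
  using alg_closed_infinite by (metis UNIV_I ex_new_if_finite)

lemma ideal_gen:
  fixes I :: "'a::field poly set"
  assumes add: "\<And>x y. x \<in> I \<Longrightarrow> y \<in> I \<Longrightarrow> x + y \<in> I"
    and mul: "\<And>c x. x \<in> I \<Longrightarrow> c * x \<in> I" and x0: "x0 \<in> I" "x0 \<noteq> 0"
  shows "\<exists>g\<in>I. g \<noteq> 0 \<and> (\<forall>x\<in>I. g dvd x)"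
proof -
  let ?P = "\<lambda>n. \<exists>g\<in>I. g \<noteq> 0 \<and> degree g = n"
  have ex: "?P (degree x0)" using x0 by blast
  obtain g where g: "g \<in> I" "g \<noteq> 0" "degree g = (LEAST n. ?P n)"
    using LeastI_ex[of ?P] ex by blast
  have "g dvd x" if x: "x \<in> I" for x
  proof (rule ccontr)
    assume nd: "\<not> g dvd x"
    then have m0: "x mod g \<noteq> 0" by (simp add: mod_eq_0_iff_dvd)
    have "x mod g = x + (- (x div g)) * g" by (simp add: mod_div_mult_eq[symmetric] algebra_simps)
    then have "x mod g \<in> I" using add mul x g(1) by metis
    then have "?P (degree (x mod g))" using m0 by blast
    then have "degree g \<le> degree (x mod g)" unfolding g(3) by (rule Least_le)
    moreover have "degree (x mod g) < degree g" using m0 g(2) degree_mod_less' by blast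
    ultimately show False by simp
  qed
  then show ?thesis using g by blast
qed

definition bez :: "'a::comm_ring_1 \<Rightarrow> 'a \<Rightarrow> bool" where
  "bez p q \<longleftrightarrow> (\<exists>u v. u * p + v * q = 1)"

lemma bezout_poly:
  fixes p q :: "'a::field poly"
  assumes "p \<noteq> 0"
  shows "\<exists>g u v. g = u * p + v * q \<and> g dvd p \<and> g dvd q \<and> g \<noteq> 0"
proof -
  let ?I = "{u * p + v * q | u v. True}"
  have "\<exists>g\<in>?I. g \<noteq> 0 \<and> (\<forall>x\<in>?I. g dvd x)"
  proof (rule ideal_gen)
    fix x y assume "x \<in> ?I" "y \<in> ?I"
    then obtain u v u' v' where "x = u * p + v * q" "y = u' * p + v' * q" by blast
    then have "x + y = (u + u') * p + (v + v') * q" by (simp add: algebra_simps)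
    then show "x + y \<in> ?I" by blast
  next
    fix c x assume "x \<in> ?I"
    then obtain u v where "x = u * p + v * q" by blast
    then have "c * x = (c * u) * p + (c * v) * q" by (simp add: algebra_simps)
    then show "c * x \<in> ?I" by blast
  next
    show "p \<in> ?I" by (rule CollectI, rule exI[of _ 1], rule exI[of _ 0]) simp
    show "p \<noteq> 0" by fact
  qed
  then obtain g where g: "g \<in> ?I" "g \<noteq> 0" "\<forall>x\<in>?I. g dvd x" by blast
  have "p \<in> ?I" by (rule CollectI, rule exI[of _ 1], rule exI[of _ 0]) simp
  moreover have "q \<in> ?I" by (rule CollectI, rule exI[of _ 0], rule exI[of _ 1]) simp
  ultimately show ?thesis using g by blast
qed

lemma bez_const:
  fixes p q :: "'a::field poly"
  assumes "g = u * p + v * q" "g = [:k:]" "k \<noteq> 0"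
  shows "bez p q"
  unfolding bez_def
  by (rule exI[of _ "smult (inverse k) u"], rule exI[of _ "smult (inverse k) v"])
    (use assms in \<open>simp add: smult_add_right[symmetric]
     flip: assms(1)[unfolded assms(2)]\<close>)

lemma coprime_noroot:
  fixes p q :: "'a::alg_closed_field poly"
  assumes "p \<noteq> 0" "\<forall>x. poly p x = 0 \<longrightarrow> poly q x \<noteq> 0"
  shows "bez p q"
proof -
  obtain g u v where g: "g = u * p + v * q" "g dvd p" "g dvd q" "g \<noteq> 0"
    using bezout_poly[OF assms(1)] by blast
  have "degree g = 0"
  proof (rule ccontr)
    assume "degree g \<noteq> 0"
    then obtain x where "poly g x = 0" using alg_closed_imp_poly_has_root by blast
    then have "poly p x = 0" "poly q x = 0"
      using g by (meson dvd_trans poly_eq_0_iff_dvd)+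
    with assms(2) show False by blast
  qed
  then obtain k where k: "g = [:k:]" by (meson degree_eq_zeroE)
  then have "k \<noteq> 0" using g(4) by simp
  then show ?thesis using bez_const g(1) k by blast
qed

lemma even_factor:
  fixes \<delta> :: "'a::alg_closed_field poly"
  assumes "(2::'a) \<noteq> 0" "pinv \<delta> = \<delta>" "\<delta> \<noteq> 0" "poly \<delta> 0 \<noteq> 0"
  shows "\<exists>\<beta>. \<beta> * pinv \<beta> = \<delta> \<and> (\<forall>x. poly \<beta> x = 0 \<longrightarrow> poly \<beta> (-x) \<noteq> 0)"
  using assms(2-)
proof (induction "degree \<delta>" arbitrary: \<delta> rule: less_induct)
  case less
  show ?case
  proof (cases "degree \<delta> = 0")
    case True
    then obtain c where c: "\<delta> = [:c:]" by (meson degree_eq_zeroE)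
    obtain e where e: "e ^ 2 = c" using nth_root_exists[of 2 c] by auto
    have "c \<noteq> 0" using less.prems c by simp
    then have "e \<noteq> 0" using e by auto
    show ?thesis
      by (rule exI[of _ "[:e:]"]) (use e c \<open>e \<noteq> 0\<close> in \<open>simp add: power2_eq_square\<close>)
  next
    case False
    then obtain r where r: "poly \<delta> r = 0" using alg_closed_imp_poly_has_root by blast
    have r0: "r \<noteq> 0" using r less.prems by auto
    have r1: "poly \<delta> (-r) = 0" using r less.prems(1) by (metis poly_pinv)
    have rr: "-r - r \<noteq> 0"
    proof
      assume "-r - r = 0"
      then have "2 * r = 0" by (simp add: algebra_simps)
      with assms(1) r0 show False by simp
    qed
    obtain q where q: "\<delta> = [:-r, 1:] * q" using r poly_eq_0_iff_dvd by blast
    have "poly q (-r) = 0" using r1 q rr by simp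
    then obtain \<delta>' where d': "q = [:r, 1:] * \<delta>'" using dvd_iff_poly_eq_0 by (metis dvdE minus_minus)
    define e :: "'a poly" where "e = [:-r, 1:] * [:r, 1:]"
    have dq: "\<delta> = e * \<delta>'" by (simp only: q d' e_def mult.assoc)
    have e0: "e \<noteq> 0" unfolding e_def by simp
    have pe: "pinv e = e" unfolding e_def pinv_mult
      by (simp add: pinv_def pcompose_pCons algebra_simps)
    have d'0: "\<delta>' \<noteq> 0" using less.prems dq by auto
    have pd': "pinv \<delta>' = \<delta>'"
      using less.prems(1) dq pe e0 by (metis mult_left_cancel pinv_mult)
    have d'00: "poly \<delta>' 0 \<noteq> 0" using less.prems dq by auto
    have "degree \<delta> = degree e + degree \<delta>'" using dq e0 d'0 by (simp add: degree_mult_eq)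
    moreover have "degree e = 2" unfolding e_def by (simp add: degree_mult_eq)
    ultimately have "degree \<delta>' < degree \<delta>" by simp
    from less.hyps[OF this pd' d'0 d'00] obtain \<beta>' where
      b': "\<beta>' * pinv \<beta>' = \<delta>'" "\<forall>x. poly \<beta>' x = 0 \<longrightarrow> poly \<beta>' (-x) \<noteq> 0" by blast
    obtain i :: 'a where i: "i ^ 2 = -1" using nth_root_exists[of 2 "-1"] by auto
    have i0: "i \<noteq> 0" using i by auto
    have key: "smult i [:s, 1:] * pinv (smult i [:s, 1:]) = e" if "s = r \<or> s = -r" for s
    proof -
      have ii: "i * (i * x) = - x" "i * i = -1" for x using i by (metis mult.assoc mult_minus1 power2_eq_square)+
      show ?thesis using that unfolding e_def
        by (auto simp: pinv_def pcompose_pCons algebra_simps ii)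
    qed
    obtain s where s: "s = r \<or> s = -r" "poly \<beta>' (-s) \<noteq> 0"
      using b'(2) by (metis minus_minus)
    define \<beta> where "\<beta> = smult i [:-s, 1:] * \<beta>'"
    have "\<beta> * pinv \<beta> = (smult i [:-s, 1:] * pinv (smult i [:-s, 1:])) * (\<beta>' * pinv \<beta>')"
      unfolding \<beta>_def pinv_mult by (simp only: mult_ac)
    then have "\<beta> * pinv \<beta> = \<delta>" using key[of "-s"] s(1) dq b'(1) by auto
    moreover have "poly \<beta> x = 0 \<longrightarrow> poly \<beta> (-x) \<noteq> 0" for x
    proof
      assume h: "poly \<beta> x = 0"
      have s0: "s \<noteq> 0" using s(1) r0 by auto
      have pb: "poly \<beta> y = i * (y - s) * poly \<beta>' y" for y unfolding \<beta>_def by (simp add: algebra_simps)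
      have c1: "x = s \<or> poly \<beta>' x = 0" using h pb i0 by simp
      have "-x \<noteq> s \<and> poly \<beta>' (-x) \<noteq> 0"
      proof (cases "x = s")
        case True
        have "-s \<noteq> s"
        proof
          assume "-s = s"
          then have "2 * s = 0" by (simp add: algebra_simps)
          with assms(1) s0 show False by simp
        qed
        then show ?thesis using True s(2) by simp
      next
        case False
        then have "poly \<beta>' x = 0" using c1 by simp
        then show ?thesis using b'(2) s(2) by auto
      qed
      then show "poly \<beta> (-x) \<noteq> 0" using pb i0 by simp
    qed
    ultimately show ?thesis by blast
  qed
qed


lemma mmul_neg_left: "(- A) ** B = - (A ** (B :: 'a::ring_1^'n^'n))"
  by (simp add: vec_eq_iff matrix_matrix_mult_def sum_negf)
lemma mmul_neg_right: "A ** (- B) = - (A ** (B :: 'a::ring_1^'n^'n))"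
  by (simp add: vec_eq_iff matrix_matrix_mult_def sum_negf)

lemma sh_cong: "skew_hermitian A \<Longrightarrow> skew_hermitian (mstar S ** A ** S)"
  unfolding skew_hermitian_def
  by (simp add: mstar_mult matrix_mul_assoc mmul_neg_left mmul_neg_right)

lemma det_mstar2: "det (mstar (S :: 'a::comm_ring_1 poly^2^2)) = pinv (det S)"
  by (subst (1 2) mk2_eta[of S]) (simp add: mstar_mk2 det_mk2)

lemma det_cong: "det (mstar S ** A ** (S :: 'a::comm_ring_1 poly^2^2)) = pinv (det S) * det A * det S"
  by (simp add: det_mul det_mstar2)

lemma sh_form:
  assumes "skew_hermitian (A :: 'a::comm_ring_1 poly^2^2)"
  shows "A = mk2 (A$1$1) (A$1$2) (- pinv (A$1$2)) (A$2$2)"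
    "pinv (A$1$1) = - A$1$1" "pinv (A$2$2) = - A$2$2"
proof -
  have "skew_hermitian (mk2 (A$1$1) (A$1$2) (A$2$1) (A$2$2))" using assms mk2_eta by metis
  then have h: "pinv (A$1$1) = - A$1$1" "pinv (A$2$1) = - A$1$2" "pinv (A$2$2) = - A$2$2"
    unfolding skew_mk2 by auto
  from h(2) have "A$2$1 = - pinv (A$1$2)" by (metis pinv_pinv pinv_uminus minus_minus)
  then show "A = mk2 (A$1$1) (A$1$2) (- pinv (A$1$2)) (A$2$2)" by (metis mk2_eta)
  show "pinv (A$1$1) = - A$1$1" "pinv (A$2$2) = - A$2$2" using h by auto
qed

lemma det_sh:
  assumes "skew_hermitian (A :: 'a::comm_ring_1 poly^2^2)"
  shows "det A = A$1$1 * A$2$2 + A$1$2 * pinv (A$1$2)"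
  by (subst sh_form(1)[OF assms]) (simp add: det_mk2)

lemma odd_at0:
  fixes a :: "'a::idom poly"
  assumes "(2::'a) \<noteq> 0" "pinv a = - a"
  shows "poly a 0 = 0"
proof -
  have "poly a 0 = - poly a 0" using assms(2) by (metis poly_pinv minus_zero poly_minus)
  then have "2 * poly a 0 = 0" by (simp add: algebra_simps)
  with assms(1) show ?thesis by simp
qed

lemma entry_ideal_add: "x \<in> entry_ideal A \<Longrightarrow> y \<in> entry_ideal A \<Longrightarrow> x + y \<in> entry_ideal A"
proof -
  assume "x \<in> entry_ideal A" "y \<in> entry_ideal A"
  then obtain c c' where "x = (\<Sum>i\<in>UNIV. \<Sum>j\<in>UNIV. c i j * A $ i $ j)"
    "y = (\<Sum>i\<in>UNIV. \<Sum>j\<in>UNIV. c' i j * A $ i $ j)" unfolding entry_ideal_def by blast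
  then have "x + y = (\<Sum>i\<in>UNIV. \<Sum>j\<in>UNIV. (\<lambda>i j. c i j + c' i j) i j * A $ i $ j)"
    by (simp add: sum.distrib distrib_right)
  then show ?thesis unfolding entry_ideal_def mem_Collect_eq
    by (intro exI[of _ "\<lambda>i j. c i j + c' i j"]) simp
qed

lemma entry_ideal_mul: "x \<in> entry_ideal A \<Longrightarrow> k * x \<in> entry_ideal A"
proof -
  assume "x \<in> entry_ideal A"
  then obtain c where "x = (\<Sum>i\<in>UNIV. \<Sum>j\<in>UNIV. c i j * A $ i $ j)"
    unfolding entry_ideal_def by blast
  then have "k * x = (\<Sum>i\<in>UNIV. \<Sum>j\<in>UNIV. (\<lambda>i j. k * c i j) i j * A $ i $ j)"
    by (simp add: sum_distrib_left mult.assoc)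
  then show ?thesis unfolding entry_ideal_def mem_Collect_eq
    by (intro exI[of _ "\<lambda>i j. k * c i j"]) simp
qed

lemma entry_ideal_entry: "(A :: 'a::comm_ring_1 poly^'n^'n) $ i $ j \<in> entry_ideal A"
proof -
  have "A $ i $ j = (\<Sum>i'\<in>UNIV. \<Sum>j'\<in>UNIV. (\<lambda>i' j'. if i' = i \<and> j' = j then 1 else 0) i' j' * A $ i' $ j')"
  proof -
    have "(\<Sum>j'\<in>UNIV. (if i' = i \<and> j' = j then 1 else 0) * A $ i' $ j') = (if i' = i then A $ i $ j else 0)" for i'
    proof -
      have e: "\<And>P X. (if P then 1 else 0) * X = (if P then X else (0::'a poly))" by simp
      show ?thesis by (cases "i' = i") (simp_all add: e)
    qed
    then show ?thesis by simp
  qed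
  then show ?thesis unfolding entry_ideal_def mem_Collect_eq
    by (intro exI[of _ "\<lambda>i' j'. if i' = i \<and> j' = j then 1 else 0"]) simp
qed

lemma entry_ideal_zero:
  assumes "\<forall>i j. A $ i $ j = 0"
  shows "entry_ideal A = {0}"
proof -
  have "entry_ideal A \<subseteq> {0}" unfolding entry_ideal_def using assms by auto
  moreover have "0 \<in> entry_ideal A" using entry_ideal_mul[OF entry_ideal_entry, of 0] by simp
  ultimately show ?thesis by blast
qed

lemma monic_assoc_eq:
  fixes g1 g2 :: "'a::field poly"
  assumes "g1 dvd g2" "g2 dvd g1" "lead_coeff g1 = 1" "lead_coeff g2 = 1"
  shows "g1 = g2"
proof -
  have n: "g1 \<noteq> 0" "g2 \<noteq> 0" using assms by auto
  obtain w where w: "g2 = g1 * w" using assms(1) by blast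
  have "degree g1 \<le> degree g2" "degree g2 \<le> degree g1" using assms n dvd_imp_degree by blast+
  moreover have "w \<noteq> 0" using w n by auto
  ultimately have "degree w = 0" using w n by (simp add: degree_mult_eq)
  then obtain k where k: "w = [:k:]" by (meson degree_eq_zeroE)
  have "lead_coeff g2 = lead_coeff g1 * k" using w k by (simp add: lead_coeff_mult)
  then have "k = 1" using assms by simp
  then show ?thesis using w k by simp
qed

lemma mgcd_1_imp:
  fixes A :: "'a::field poly ^ 'n ^ 'n"
  assumes "mgcd A = 1"
  shows "1 \<in> entry_ideal A"
proof -
  let ?P = "\<lambda>g. (g = 0 \<or> lead_coeff g = 1) \<and> entry_ideal A = {x. g dvd x}"
  have ex: "\<exists>g. ?P g"
  proof (cases "\<forall>i j. A $ i $ j = 0")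
    case True
    then show ?thesis using entry_ideal_zero[OF True] by (intro exI[of _ 0]) auto
  next
    case False
    then obtain i j where ij: "A $ i $ j \<noteq> 0" by blast
    obtain g where g: "g \<in> entry_ideal A" "g \<noteq> 0" "\<forall>x\<in>entry_ideal A. g dvd x"
      using ideal_gen[of "entry_ideal A", OF entry_ideal_add entry_ideal_mul entry_ideal_entry ij]
      by blast
    define g' where "g' = [:inverse (lead_coeff g):] * g"
    have l: "lead_coeff g' = 1" unfolding g'_def using g(2) by (simp add: lead_coeff_mult)
    have g'I: "g' \<in> entry_ideal A" unfolding g'_def using entry_ideal_mul g(1) by blast
    have "entry_ideal A = {x. g' dvd x}"
    proof safe
      fix x assume "x \<in> entry_ideal A"
      then have "g dvd x" using g(3) by blast
      have "g = [:lead_coeff g:] * g'" unfolding g'_def using g(2)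
        by (simp add: mult.assoc[symmetric] one_pCons[symmetric])
      then have "g' dvd g" by (metis dvd_triv_right)
      then show "g' dvd x" using \<open>g dvd x\<close> by (rule dvd_trans)
    next
      fix x assume "g' dvd x"
      then obtain k where "x = g' * k" by blast
      then show "x \<in> entry_ideal A" using entry_ideal_mul[OF g'I, of k] by (simp add: mult.commute)
    qed
    then show ?thesis using l by blast
  qed
  have un: "g1 = g2" if h1: "?P g1" and h2: "?P g2" for g1 g2
  proof -
    have d1: "g1 dvd g2" using h1 h2 by auto
    have d2: "g2 dvd g1" using h1 h2 by auto
    show ?thesis
    proof (cases "g1 = 0")
      case True
      then show ?thesis using d1 by simp
    next
      case False
      then have "lead_coeff g1 = 1" using h1 by blast
      moreover have "g2 \<noteq> 0" using False d2 by auto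
      then have "lead_coeff g2 = 1" using h2 by blast
      ultimately show ?thesis using monic_assoc_eq d1 d2 by blast
    qed
  qed
  obtain g0 where g0: "?P g0" using ex by blast
  have "?P (mgcd A)" unfolding mgcd_def by (rule theI[of ?P g0]) (use g0 un in \<open>blast, blast\<close>)
  then show ?thesis using assms by simp
qed

lemma prim_points:
  fixes A :: "'a::field poly ^ 2 ^ 2"
  assumes "mgcd A = 1"
  shows "\<exists>i j. poly (A $ i $ j) x \<noteq> 0"
proof (rule ccontr)
  assume h: "\<not> ?thesis"
  obtain c where "1 = (\<Sum>i\<in>UNIV. \<Sum>j\<in>UNIV. c i j * A $ i $ j)"
    using mgcd_1_imp[OF assms] unfolding entry_ideal_def by blast
  then have "poly 1 x = poly (\<Sum>i\<in>UNIV. \<Sum>j\<in>UNIV. c i j * A $ i $ j) x" by simp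
  also have "\<dots> = 0" using h by (simp add: poly_sum)
  finally show False by simp
qed


lemma choose_y:
  fixes a b d :: "'a::alg_closed_field poly"
  assumes two: "(2::'a) \<noteq> 0"
    and prim: "\<And>x. poly a x \<noteq> 0 \<or> poly b x \<noteq> 0 \<or> poly b (-x) \<noteq> 0 \<or> poly d x \<noteq> 0"
    and fin: "finite Z" and z0: "0 \<notin> Z"
  shows "\<exists>y. \<forall>z\<in>Z. poly ((a + pinv y * (- pinv b)) + (b + pinv y * d) * y) z \<noteq> 0"
proof -
  define Q where "Q z \<mu> = [:poly a z + poly b z * \<mu> * z + poly b (-z) * \<mu> * z - poly d z * \<mu>^2 * z^2,
      poly b z - poly b (-z), poly d z:]" for z \<mu>
  have val: "poly ((a + pinv y * (- pinv b)) + (b + pinv y * d) * y) z = poly (Q z \<mu>) lam"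
    if "y = [:lam, \<mu>:]" for y z lam \<mu>
    using that unfolding Q_def by (simp add: algebra_simps power2_eq_square)
  define M where "M = (\<lambda>z. - poly a z / (2 * poly b z * z)) ` Z"
  have "finite M" unfolding M_def using fin by simp
  then obtain \<mu> where \<mu>: "\<mu> \<notin> M" using exists_not_in by blast
  have Qn: "Q z \<mu> \<noteq> 0" if z: "z \<in> Z" for z
  proof
    assume "Q z \<mu> = 0"
    then have h: "poly d z = 0" "poly b z = poly b (-z)"
      "poly a z + poly b z * \<mu> * z + poly b (-z) * \<mu> * z = 0"
      unfolding Q_def by auto
    then have h3: "poly a z + 2 * poly b z * \<mu> * z = 0" by (simp add: algebra_simps)
    have zz: "z \<noteq> 0" using z z0 by auto
    show False
    proof (cases "poly b z = 0")
      case True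
      then show False using h h3 prim[of z] by simp
    next
      case False
      then have "\<mu> = - poly a z / (2 * poly b z * z)" using h3 zz two
        by (simp add: field_simps) (metis add.commute add_eq_0_iff2)
      then show False using \<mu> z unfolding M_def by blast
    qed
  qed
  have "finite (\<Union>z\<in>Z. {l. poly (Q z \<mu>) l = 0})"
    using fin Qn poly_roots_finite by blast
  then obtain lam where lam: "lam \<notin> (\<Union>z\<in>Z. {l. poly (Q z \<mu>) l = 0})" using exists_not_in by blast
  show ?thesis
    by (rule exI[of _ "[:lam, \<mu>:]"]) (use lam val in auto)
qed


lemma isotropic_step:
  fixes A :: "'a::field poly^2^2"
  assumes sh: "skew_hermitian A" and a0: "A$1$1 \<noteq> 0"
    and bdet: "\<beta> * pinv \<beta> = det A" and cop: "bez (A$1$1) \<beta>"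
  shows "\<exists>S k. invertible S \<and> k \<noteq> 0 \<and> (mstar S ** A ** S)$1$1 = 0
     \<and> (mstar S ** A ** S)$1$2 = smult k (pinv \<beta>)"
proof -
  define a where "a = A$1$1"
  define b where "b = A$1$2"
  define d where "d = A$2$2"
  have Aeq: "A = mk2 a b (- pinv b) d" unfolding a_def b_def d_def using sh_form(1)[OF sh] .
  have oa: "pinv a = - a" unfolding a_def using sh_form(2)[OF sh] .
  have od: "pinv d = - d" unfolding d_def using sh_form(3)[OF sh] .
  have dl: "\<beta> * pinv \<beta> = a * d + b * pinv b" using bdet det_sh[OF sh] a_def b_def d_def by simp
  define f where "f = \<beta> - b"
  have a0': "a \<noteq> 0" using a0 a_def by simp
  obtain g u v where g: "g = u * a + v * f" "g dvd a" "g dvd f" "g \<noteq> 0"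
    using bezout_poly[OF a0'] by blast
  obtain a' where a': "a = g * a'" using g(2) by blast
  obtain f' where f': "f = g * f'" using g(3) by blast
  have "g * (u * a' + v * f') = g * 1" using g(1) a' f' by (simp add: algebra_simps)
  then have uv: "u * a' + v * f' = 1" using g(4) by (metis mult_left_cancel)
  define S where "S = mk2 f' (-u) a' v"
  have invS: "invertible S" unfolding S_def
    by (rule invertible_mk2) (use uv in \<open>simp add: algebra_simps\<close>)
  define E where "E = mstar S ** A ** S"
  have E11: "E$1$1 = (pinv f' * a + pinv a' * (- pinv b)) * f' + (pinv f' * b + pinv a' * d) * a'"
    unfolding E_def S_def Aeq by (simp add: mstar_mk2 mk2_mult)
  have E12: "E$1$2 = (pinv f' * a + pinv a' * (- pinv b)) * (-u) + (pinv f' * b + pinv a' * d) * v"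
    unfolding E_def S_def Aeq by (simp add: mstar_mk2 mk2_mult)
  have pf: "pinv f = pinv \<beta> - pinv b" unfolding f_def by simp
  have pa': "pinv g * pinv a' = - a" using a' oa by (metis pinv_mult)
  have pf': "pinv g * pinv f' = pinv \<beta> - pinv b" using f' pf by (metis pinv_mult)
  have c1: "pinv g * g * E$1$1 = 0"
    unfolding E11 using pa' pf' dl a' f' f_def by algebra
  have c2: "pinv g * E$1$2 = - pinv \<beta> * g"
    unfolding E12 using pa' pf' dl a' f' f_def g(1) by algebra
  have pg0: "pinv g \<noteq> 0" using g(4) by simp
  have "E$1$1 = 0" using c1 g(4) pg0 by simp
  have gd1: "g dvd pinv a" using g(2) oa by simp
  have iden: "\<beta> * pinv f + pinv b * f = a * d" unfolding pf f_def using dl by (simp add: algebra_simps)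
  have gbf: "g dvd \<beta> * pinv f"
  proof -
    have "g dvd a * d - pinv b * f" using g(2,3) by simp
    then show ?thesis using iden by (metis add_diff_cancel_right')
  qed
  obtain s t where st: "s * a + t * \<beta> = 1" using cop a_def bez_def by blast
  have h1: "g dvd (pinv f * s) * a + t * (\<beta> * pinv f)" using g(2) gbf
    by (metis dvd_add dvd_mult)
  have h2: "pinv f = (pinv f * s) * a + t * (\<beta> * pinv f)"
  proof -
    have "pinv f = pinv f * (s * a + t * \<beta>)" using st by simp
    then show ?thesis by (simp add: algebra_simps)
  qed
  have gd2: "g dvd pinv f" using h1 h2 by simp
  have "pinv g = pinv u * pinv a + pinv v * pinv f" using g(1) by simp
  then have "g dvd pinv g" using gd1 gd2 by simp
  then obtain w where w: "pinv g = g * w" by blast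
  have "w \<noteq> 0" using w pg0 by auto
  then have "degree w = 0" using w g(4) by (metis add_cancel_left_right degree_mult_eq degree_pinv)
  then obtain \<kappa> where \<kappa>: "w = [:\<kappa>:]" by (meson degree_eq_zeroE)
  have k0: "\<kappa> \<noteq> 0" using \<kappa> \<open>w \<noteq> 0\<close> by simp
  have "g * (smult \<kappa> (E$1$2) + pinv \<beta>) = 0" using c2 w \<kappa> by (simp add: algebra_simps)
  then have "smult \<kappa> (E$1$2) = - pinv \<beta>" using g(4) by (simp add: eq_neg_iff_add_eq_0)
  then have "E$1$2 = smult (- inverse \<kappa>) (pinv \<beta>)" using k0
    by (metis (no_types, lifting) smult_minus_left smult_minus_right smult_smult left_inverse smult_1_left
        minus_minus)
  moreover have "- inverse \<kappa> \<noteq> 0" using k0 by simp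
  ultimately show ?thesis using invS \<open>E$1$1 = 0\<close> unfolding E_def by blast
qed


lemma mat_mk2: "(mat c :: 'a::zero ^2^2) = mk2 c 0 0 c"
  by (simp add: vec_eq_iff forall_2 mat_def)

lemma two_poly: "[:2:] = (2::'a::comm_ring_1 poly)"
  by (rule numeral_poly[symmetric])

lemma kill_step:
  fixes A :: "'a::field poly^2^2"
  assumes two: "(2::'a) \<noteq> 0" and sh: "skew_hermitian A" and a0: "A$1$1 = 0"
    and cop: "bez (A$1$2) (pinv (A$1$2))"
  shows "congruent_mat A (mk2 0 (A$1$2) (- pinv (A$1$2)) 0)"
proof -
  define \<rho> where "\<rho> = A$1$2"
  define d where "d = A$2$2"
  have Aeq: "A = mk2 0 \<rho> (- pinv \<rho>) d" using sh_form(1)[OF sh] unfolding \<rho>_def d_def a0 .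
  have od: "pinv d = - d" unfolding d_def using sh_form(3)[OF sh] .
  obtain u v where uv: "u * \<rho> + v * pinv \<rho> = 1" using cop \<rho>_def bez_def by blast
  define U where "U = d * u"
  define V where "V = d * v"
  have UV: "U * \<rho> + V * pinv \<rho> = d" unfolding U_def V_def using uv
    by (metis distrib_left mult.assoc mult_1_right)
  have UV': "pinv U * pinv \<rho> + pinv V * \<rho> = - d" using arg_cong[OF UV, of pinv] od by simp
  define x where "x = smult (inverse 2) (V - pinv U)"
  have x2: "[:2:] * x = V - pinv U" unfolding x_def using two by simp
  have px2: "[:2:] * pinv x = pinv V - U" unfolding x_def using two by simp
  define S where "S = mk2 1 x 0 1"
  define E where "E = mstar S ** A ** S"
  have E: "E = mk2 0 \<rho> (- pinv \<rho>) (pinv x * \<rho> + (- pinv \<rho> * x + d))"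
    unfolding E_def S_def Aeq by (simp add: mstar_mk2 mk2_mult algebra_simps)
  have d2: "[:2:] * d = d + d" unfolding two_poly by (rule mult_2)
  have "[:2:] * (pinv x * \<rho> + (- pinv \<rho> * x + d)) = ([:2:] * pinv x) * \<rho> - pinv \<rho> * ([:2:] * x) + [:2:] * d"
    by (simp add: algebra_simps)
  also have "\<dots> = (pinv V - U) * \<rho> - pinv \<rho> * (V - pinv U) + (d + d)" using x2 px2 d2 by simp
  also have "\<dots> = (pinv U * pinv \<rho> + pinv V * \<rho>) - (U * \<rho> + V * pinv \<rho>) + (d + d)"
    by (simp add: algebra_simps)
  also have "\<dots> = 0" using UV UV' by simp
  finally have "[:2:] * (pinv x * \<rho> + (- pinv \<rho> * x + d)) = 0" .
  then have "pinv x * \<rho> + (- pinv \<rho> * x + d) = 0" using two by simp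
  then have EE: "E = mk2 0 \<rho> (- pinv \<rho>) 0" using E by simp
  have "congruent_mat A E"
    using congruent_mk2[of 1 1 x 0 E A] unfolding E_def S_def by simp
  then have "congruent_mat A (mk2 0 \<rho> (- pinv \<rho>) 0)" by (simp only: EE)
  then show ?thesis by (simp only: \<rho>_def)
qed


lemma scale_step:
  fixes \<rho> :: "'a::field poly"
  assumes "k \<noteq> 0"
  shows "congruent_mat (mk2 0 (smult k \<rho>) (- pinv (smult k \<rho>)) 0) (mk2 0 \<rho> (- pinv \<rho>) 0)"
proof -
  define S where "S = mk2 [:inverse k:] 0 0 (1 :: 'a poly)"
  have "S ** mk2 [:k:] 0 0 1 = mat 1" unfolding S_def
    by (simp only: mk2_mult mat1_mk2) (simp add: assms flip: one_pCons)
  moreover have "mk2 [:k:] 0 0 1 ** S = mat 1" unfolding S_def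
    by (simp only: mk2_mult mat1_mk2) (simp add: assms flip: one_pCons)
  ultimately have inv: "invertible S" unfolding invertible_def by blast
  have ms: "mstar S = S" unfolding S_def by (simp add: mstar_mk2)
  have "S ** mk2 0 (smult k \<rho>) (- pinv (smult k \<rho>)) 0 ** S
     = mk2 0 (smult (inverse k * k) \<rho>) (- smult (k * inverse k) (pinv \<rho>)) 0"
    unfolding S_def by (simp only: mk2_mult) (simp add: mult.commute)
  also have "\<dots> = mk2 0 \<rho> (- pinv \<rho>) 0" using assms by simp
  finally show ?thesis using inv ms congruent_mat_def by metis
qed


lemma prim_sh:
  fixes A :: "'a::field poly^2^2"
  assumes sh: "skew_hermitian A" and g1: "mgcd A = 1"
  shows "poly (A$1$1) x \<noteq> 0 \<or> poly (A$1$2) x \<noteq> 0 \<or> poly (A$1$2) (-x) \<noteq> 0 \<or> poly (A$2$2) x \<noteq> 0"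
proof -
  obtain i j where ij: "poly (A$i$j) x \<noteq> 0" using prim_points[OF g1] by blast
  have a21: "A$2$1 = - pinv (A$1$2)" using sh_form(1)[OF sh] by (metis mk2_nth(3))
  show ?thesis using ij a21 exhaust_2[of i] exhaust_2[of j] by auto
qed

lemma delta_props:
  fixes A :: "'a::field poly^2^2"
  assumes two: "(2::'a) \<noteq> 0" and sh: "skew_hermitian A" and g1: "mgcd A = 1"
  shows "pinv (det A) = det A" "poly (det A) 0 \<noteq> 0"
proof -
  have oa: "pinv (A$1$1) = - A$1$1" and od: "pinv (A$2$2) = - A$2$2" using sh_form[OF sh] by auto
  show "pinv (det A) = det A" unfolding det_sh[OF sh] using oa od by (simp add: mult.commute)
  have a0: "poly (A$1$1) 0 = 0" using odd_at0[OF two oa] .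
  have d0: "poly (A$2$2) 0 = 0" using odd_at0[OF two od] .
  have "poly (A$1$2) 0 \<noteq> 0" using prim_sh[OF sh g1, of 0] a0 d0 by auto
  then show "poly (det A) 0 \<noteq> 0" unfolding det_sh[OF sh] using a0 by simp
qed

lemma reduce:
  fixes A :: "'a::alg_closed_field poly^2^2"
  assumes two: "(2::'a) \<noteq> 0" and sh: "skew_hermitian A" and g1: "mgcd A = 1"
    and bd: "\<beta> * pinv \<beta> = det A" and rc: "\<forall>x. poly \<beta> x = 0 \<longrightarrow> poly \<beta> (-x) \<noteq> 0"
    and dn: "det A \<noteq> 0"
  shows "congruent_mat A (mk2 0 (pinv \<beta>) (- \<beta>) 0)"
proof -
  define a where "a = A$1$1"
  define b where "b = A$1$2"
  define d where "d = A$2$2"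
  have Aeq: "A = mk2 a b (- pinv b) d" unfolding a_def b_def d_def using sh_form(1)[OF sh] .
  have prim: "poly a x \<noteq> 0 \<or> poly b x \<noteq> 0 \<or> poly b (-x) \<noteq> 0 \<or> poly d x \<noteq> 0" for x
    unfolding a_def b_def d_def using prim_sh[OF sh g1] .
  define Z where "Z = {x. poly (det A) x = 0} \<union> {1}"
  have finZ: "finite Z" unfolding Z_def using poly_roots_finite[OF dn] by simp
  have Z0: "0 \<notin> Z" unfolding Z_def using delta_props(2)[OF two sh g1] by simp
  obtain y where y: "\<forall>z\<in>Z. poly ((a + pinv y * (- pinv b)) + (b + pinv y * d) * y) z \<noteq> 0"
    using choose_y[OF two prim finZ Z0] by blast
  define S1 where "S1 = mk2 1 0 y (1::'a poly)"
  define A1 where "A1 = mstar S1 ** A ** S1"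
  have cong1: "congruent_mat A A1" unfolding A1_def S1_def by (rule congruent_mk2) simp_all
  have a1: "A1$1$1 = (a + pinv y * (- pinv b)) + (b + pinv y * d) * y"
    unfolding A1_def S1_def by (subst Aeq) (simp add: mstar_mk2 mk2_mult)
  have sh1: "skew_hermitian A1" unfolding A1_def using sh_cong[OF sh] .
  have det1: "det A1 = det A" unfolding A1_def det_cong S1_def by (simp add: det_mk2)
  have a1n: "A1$1$1 \<noteq> 0" using y a1 unfolding Z_def by fastforce
  have bz: "bez (A1$1$1) \<beta>"
  proof (rule coprime_noroot[OF a1n], intro allI impI notI)
    fix x assume h: "poly (A1$1$1) x = 0" "poly \<beta> x = 0"
    then have "poly (det A) x = 0" using bd by (metis mult_zero_left poly_mult)
    then have "x \<in> Z" unfolding Z_def by simp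
    then show False using y a1 h(1) by auto
  qed
  obtain S2 k where S2: "invertible S2" "k \<noteq> 0" "(mstar S2 ** A1 ** S2)$1$1 = 0"
    "(mstar S2 ** A1 ** S2)$1$2 = smult k (pinv \<beta>)"
    using isotropic_step[OF sh1 a1n _ bz] bd det1 by metis
  define A2 where "A2 = mstar S2 ** A1 ** S2"
  have cong2: "congruent_mat A1 A2" unfolding A2_def congruent_mat_def using S2(1) by blast
  have sh2: "skew_hermitian A2" unfolding A2_def using sh_cong[OF sh1] .
  have b0: "\<beta> \<noteq> 0" using bd dn by auto
  have bz2: "bez (A2$1$2) (pinv (A2$1$2))"
  proof -
    have r: "A2$1$2 = smult k (pinv \<beta>)" using S2(4) A2_def by simp
    show ?thesis unfolding r
    proof (rule coprime_noroot, use b0 S2(2) in simp, intro allI impI)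
      fix x assume "poly (smult k (pinv \<beta>)) x = 0"
      then have "poly \<beta> (-x) = 0" using S2(2) by simp
      then have "poly \<beta> x \<noteq> 0" using rc by (metis minus_minus)
      then show "poly (pinv (smult k (pinv \<beta>))) x \<noteq> 0" using S2(2) by simp
    qed
  qed
  have cong3: "congruent_mat A2 (mk2 0 (A2$1$2) (- pinv (A2$1$2)) 0)"
    using kill_step[OF two sh2 _ bz2] S2(3) A2_def by simp
  have cong4: "congruent_mat (mk2 0 (A2$1$2) (- pinv (A2$1$2)) 0) (mk2 0 (pinv \<beta>) (- \<beta>) 0)"
    using scale_step[OF S2(2), of "pinv \<beta>"] S2(4) A2_def by simp
  show ?thesis using cong1 cong2 cong3 cong4 congruent_trans by blast
qed

theorem lemma4p4:
  fixes A B :: "'a::alg_closed_field poly ^ 2 ^ 2"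
  assumes "(2::'a) \<noteq> 0"
    and "skew_hermitian A" and "skew_hermitian B"
    and "mgcd A = 1" and "mgcd B = 1"
    and "det A = det B" and "det A \<noteq> 0"
  shows "congruent_mat A B"
proof -
  obtain \<beta> where b: "\<beta> * pinv \<beta> = det A" "\<forall>x. poly \<beta> x = 0 \<longrightarrow> poly \<beta> (-x) \<noteq> 0"
    using even_factor[OF assms(1) delta_props(1)[OF assms(1,2,4)] assms(7)
        delta_props(2)[OF assms(1,2,4)]] by blast
  have cA: "congruent_mat A (mk2 0 (pinv \<beta>) (- \<beta>) 0)"
    using reduce[OF assms(1,2,4) b(1,2) assms(7)] .
  have cB: "congruent_mat B (mk2 0 (pinv \<beta>) (- \<beta>) 0)"
    using reduce[OF assms(1,3,5) _ b(2)] b(1) assms(6,7) by simp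
  show ?thesis using cA congruent_sym[OF cB] congruent_trans by blast
qed


end
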